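(* Consider Setting B and suppose the sequence of communication graphs $\{\mathcal G[k]\}_{k\ge0}$ is jointly strongly $(3f+1)$-robust w.r.t. the source set $\mathcal S$. Then for any desired rate $\rho\in(0,1)$, the regular source nodes can choose observer gains $l_i$ such that, when the regular nodes run Algorithm 2, for every $f$-total Byzantine adversarial set $\mathcal A$ and every adversarial behavior, and for every initial state and initial estimates, there exist constants $c\ge0$ and $K\in\mathbb N$ with $|\hat x_i[k]-x[k]|\le c\rho^k$ for all $k\ge K$ and all $i\in\mathcal R$.
   Context: Setting B. Scalar system $x[k+1]=ax[k]$, $a\in\mathbb R$, monitored by nodes $\mathcal V=\{1,\dots,N\}$ with measurements $y_i[k]=c_ix[k]$, $c_i\in\mathbb R$. Source set $\mathcal S=\{i\in\mathcal V:c_i\neq0\}$. Time-varying directed graphs $\mathcal G[k]=(\mathcal V,\mathcal E[k])$, $\mathcal N_i[k]=\{l\ne i:(l,i)\in\mathcal E[k]\}$; the union graph over an interval has the union of the edge sets. An unknown set $\mathcal A\subseteq\mathcal V$ of adversarial nodes with $|\mathcal A|\le f$ ($f$-total model; $\mathcal A$ may intersect $\mathcal S$); $\mathcal R=\mathcal V\setminus\mathcal A$ are regular. Adversaries are Byzantine: at each time they may send arbitrary, possibly different values (of both estimate and freshness index) to different out-neighbors, or send nothing, and may collude. At each time $k$, each node $l$ sends to its out-neighbors a pair (estimate, freshness index); regular $l$ sends its true $(\hat x_l[k],\tau_l[k])$. Algorithm 2 (executed by regular nodes). Regular source $i\in\mathcal S$: $\tau_i[k]=0$ for all $k$ and $\hat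 x_i[k+1]=a\hat x_i[k]+l_i(y_i[k]-c_i\hat x_i[k])$ with observer gain $l_i$. Regular non-source $i$: keeps $\hat x_i[k]$ (arbitrary initial), $\tau_i[k]\in\mathbb N\cup\{\omega\}$ with $\tau_i[0]=\omega$, and a list $\mathcal M_i$ of distinct node labels (initially empty, at most $2f+1$ entries, stored in $2f+1$ slots) with, for each $l\in\mathcal M_i$, a stored estimate $v_{i,l}$, stored index $d_{i,l}\in\mathbb N$ and time stamp $\phi_{i,l}$. At time $k$ let $\mathcal J_i[k]$ be the set of $l\in\mathcal N_i[k]$ whose reported index $\tau_l[k]$ lies in $\mathbb N$ and satisfies $\tau_l[k]\le k$. "Appending $l$ at time $k$" means: put $l$ in $\mathcal M_i$ (if absent), set $v_{i,l}=\hat x_l[k]$, $d_{i,l}=\tau_l[k]$ (reported values), $\phi_{i,l}=k$. Filtering update (F) at time $k$ (requires $|\mathcal M_i|=2f+1$): set $\tau_i[k+1]=\max_{l\in\mathcal M_i}d_{i,l}+1$; form $\bar x_{i,l}[k]=a^{k-\phi_{i,l}}v_{i,l}$ for $l\in\mathcal M_i$; discard the $f$ largest and $f$ smallest of these $2f+1$ values, call the remaining one $\bar x_i[k]$, and set $\hat x_i[k+1]=a\bar x_i[k]$. Case $\tau_i[k]=\omega$: let $\mathcal J'=\mathcal J_i[k]\setminus\mathcal M_i$. If $|\mathcal M_i|+|\mathcal J'|<2f+1$, append every $l\in\mathcal J'$, set $\tau_i[k+1]=\omega$ and $\hat x_i[k+1]=a\hat x_i[k]$. Otherwise append the $2f+1-|\mathcal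 M_i|$ nodes of $\mathcal J'$ with smallest reported indices (ties broken arbitrarily) and perform (F). Case $\tau_i[k]\ne\omega$: for each $l\in\mathcal J_i[k]\cap\mathcal M_i$ with reported $\tau_l[k]<d_{i,l}$, append $l$ (refreshing its entries); then rank the nodes of $\mathcal M_i\cup(\mathcal J_i[k]\setminus\mathcal M_i)$ by index ($d_{i,l}$ for $l\in\mathcal M_i$, reported $\tau_l[k]$ otherwise), keep the $2f+1$ with smallest index (ties arbitrary), appending newcomers and deleting dropped nodes (a retained node keeps its storage slot; a newcomer occupies the slot of a dropped node), and perform (F). In all cases, after the step every stored $d_{i,l}$ is incremented by $1$, and $\mathcal M_i$, $v$, $\phi$ carry over to time $k+1$. Definitions. For a graph $\mathcal G=(\mathcal V,\mathcal E)$ with in-neighbor sets $\mathcal N_i$ and $r\in\mathbb N_+$, a set $\mathcal C\subseteq\mathcal V$ is $r$-reachable if some $i\in\mathcal C$ has $|\mathcal N_i\setminus\mathcal C|\ge r$. $\mathcal G$ is strongly $r$-robust w.r.t. $\mathcal S\subset\mathcal V$ if every nonempty $\mathcal C\subseteq\mathcal V\setminus\mathcal S$ is $r$-reachable. A sequence $\{\mathcal G[k]\}$ is jointly strongly $r$-robust w.r.t. $\mathcal S$ if there is $T\in\mathbb N_+$ such that the union graph over $[kT,(k+1)T-1]$ is strongly $r$-robust w.r.t. $\mathcal S$ for every $k\in\mathbb N$. *)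

theory Defs
  imports Complex_Main
begin

text \<open>An edge (l,i) means l sends to i. Node labels are naturals; the node set is V.\<close>

definition in_nbrs :: "(nat \<times> nat) set \<Rightarrow> nat \<Rightarrow> nat set" where
  "in_nbrs E i = {l. l \<noteq> i \<and> (l, i) \<in> E}"

definition r_reachable :: "(nat \<times> nat) set \<Rightarrow> nat set \<Rightarrow> nat \<Rightarrow> bool" where
  "r_reachable E C r \<longleftrightarrow> (\<exists>i\<in>C. card (in_nbrs E i - C) \<ge> r)"

definition strongly_robust :: "nat set \<Rightarrow> (nat \<times> nat) set \<Rightarrow> nat set \<Rightarrow> nat \<Rightarrow> bool" where
  "strongly_robust V E S r \<longleftrightarrow>
     (\<forall>C. C \<subseteq> V - S \<and> C \<noteq> {} \<longrightarrow> r_reachable E C r)"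

definition jointly_strongly_robust ::
  "nat set \<Rightarrow> (nat \<Rightarrow> (nat \<times> nat) set) \<Rightarrow> nat set \<Rightarrow> nat \<Rightarrow> bool" where
  "jointly_strongly_robust V E S r \<longleftrightarrow>
     (\<exists>T::nat. T > 0 \<and>
        (\<forall>k. strongly_robust V (\<Union>t\<in>{k*T..<(k+1)*T}. E t) S r))"

definition source_set :: "nat set \<Rightarrow> (nat \<Rightarrow> real) \<Rightarrow> nat set" where
  "source_set V c = {i \<in> V. c i \<noteq> 0}"

text \<open>A message is None (nothing sent) or Some (estimate, index); an index is
  None (= omega) or Some t with t a natural number.\<close>

type_synonym msg = "(real \<times> nat option) option"

definition J_set :: "nat set \<Rightarrow> nat \<Rightarrow> (nat \<Rightarrow> msg) \<Rightarrow> nat set" where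
  "J_set Nb k m = {l \<in> Nb. \<exists>x t. m l = Some (x, Some t) \<and> t \<le> k}"

definition rx :: "msg \<Rightarrow> real" where "rx ms = fst (the ms)"
definition rt :: "msg \<Rightarrow> nat" where "rt ms = the (snd (the ms))"

text \<open>Discarding the f largest and f smallest of 2f+1 values leaves the (f+1)-th
  smallest one, i.e. index f of the sorted list.\<close>

definition filt_tau :: "nat set \<Rightarrow> (nat \<Rightarrow> nat) \<Rightarrow> nat option" where
  "filt_tau M d = Some (Max (d ` M) + 1)"

definition filt_x :: "nat \<Rightarrow> real \<Rightarrow> nat \<Rightarrow> nat set \<Rightarrow> (nat \<Rightarrow> real) \<Rightarrow> (nat \<Rightarrow> nat) \<Rightarrow> real" where
  "filt_x f a k M v ph =
     a * (sort (map (\<lambda>l. a ^ (k - ph l) * v l) (sorted_list_of_set M)) ! f)"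

text \<open>Arguments: f, a, time k, in-neighbour set, received messages m (m l = what l
  reported at time k), current state (xhat, tau, M, v, d, phi) and next state.
  Stored data are only meaningful for labels in M. The primed quantities are the
  stored data after appending/refreshing and before the increment of d.\<close>

definition nonsource_step ::
  "nat \<Rightarrow> real \<Rightarrow> nat \<Rightarrow> nat set \<Rightarrow> (nat \<Rightarrow> msg) \<Rightarrow>
   real \<Rightarrow> nat option \<Rightarrow> nat set \<Rightarrow> (nat \<Rightarrow> real) \<Rightarrow> (nat \<Rightarrow> nat) \<Rightarrow> (nat \<Rightarrow> nat) \<Rightarrow>
   real \<Rightarrow> nat option \<Rightarrow> nat set \<Rightarrow> (nat \<Rightarrow> real) \<Rightarrow> (nat \<Rightarrow> nat) \<Rightarrow> (nat \<Rightarrow> nat) \<Rightarrow> bool"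
where
  "nonsource_step f a k Nb m x \<tau> M v d ph x1 \<tau>1 M1 v1 d1 ph1 \<longleftrightarrow>
   (let J = J_set Nb k m in
    \<exists>M' v' d' ph'.
      M1 = M' \<and> (\<forall>l\<in>M'. v1 l = v' l \<and> d1 l = d' l + 1 \<and> ph1 l = ph' l) \<and>
      (case \<tau> of
         None \<Rightarrow>
           (let J' = J - M in
            if card M + card J' < 2*f+1 then
              M' = M \<union> J' \<and>
              (\<forall>l\<in>M. v' l = v l \<and> d' l = d l \<and> ph' l = ph l) \<and>
              (\<forall>l\<in>J'. v' l = rx (m l) \<and> d' l = rt (m l) \<and> ph' l = k) \<and>
              \<tau>1 = None \<and> x1 = a * x
            else
              (\<exists>B. B \<subseteq> J' \<and> card B = 2*f+1 - card M \<and>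
                 (\<forall>l\<in>B. \<forall>l'\<in>J' - B. rt (m l) \<le> rt (m l')) \<and>
                 M' = M \<union> B \<and>
                 (\<forall>l\<in>M. v' l = v l \<and> d' l = d l \<and> ph' l = ph l) \<and>
                 (\<forall>l\<in>B. v' l = rx (m l) \<and> d' l = rt (m l) \<and> ph' l = k) \<and>
                 \<tau>1 = filt_tau M' d' \<and> x1 = filt_x f a k M' v' ph'))
       | Some _ \<Rightarrow>
           (let R = {l \<in> J \<inter> M. rt (m l) < d l};
                vr = (\<lambda>l. if l \<in> R then rx (m l) else v l);
                dr = (\<lambda>l. if l \<in> R then rt (m l) else d l);
                phr = (\<lambda>l. if l \<in> R then k else ph l);
                idx = (\<lambda>l. if l \<in> M then dr l else rt (m l))
            in M' \<subseteq> M \<union> J \<and> card M' = 2*f+1 \<and>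
               (\<forall>l\<in>M'. \<forall>l'\<in>(M \<union> J) - M'. idx l \<le> idx l') \<and>
               (\<forall>l\<in>M' \<inter> M. v' l = vr l \<and> d' l = dr l \<and> ph' l = phr l) \<and>
               (\<forall>l\<in>M' - M. v' l = rx (m l) \<and> d' l = rt (m l) \<and> ph' l = k) \<and>
               \<tau>1 = filt_tau M' d' \<and> x1 = filt_x f a k M' v' ph')))"

text \<open>x: plant state over time; xh i k, tau i k, M i k, v i k l, d i k l, ph i k l:
  state of node i at time k. adv k l i: what adversarial node l sends to i at time k.\<close>

definition reported ::
  "nat set \<Rightarrow> (nat \<Rightarrow> nat \<Rightarrow> nat \<Rightarrow> msg) \<Rightarrow> (nat \<Rightarrow> nat \<Rightarrow> real) \<Rightarrow> (nat \<Rightarrow> nat \<Rightarrow> nat option)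
   \<Rightarrow> nat \<Rightarrow> nat \<Rightarrow> nat \<Rightarrow> msg" where
  "reported A adv xh tau k l i = (if l \<in> A then adv k l i else Some (xh l k, tau l k))"

definition alg2_exec ::
  "nat set \<Rightarrow> (nat \<Rightarrow> (nat \<times> nat) set) \<Rightarrow> nat \<Rightarrow> real \<Rightarrow> (nat \<Rightarrow> real) \<Rightarrow> (nat \<Rightarrow> real) \<Rightarrow>
   nat set \<Rightarrow> (nat \<Rightarrow> nat \<Rightarrow> nat \<Rightarrow> msg) \<Rightarrow> (nat \<Rightarrow> real) \<Rightarrow>
   (nat \<Rightarrow> nat \<Rightarrow> real) \<Rightarrow> (nat \<Rightarrow> nat \<Rightarrow> nat option) \<Rightarrow> (nat \<Rightarrow> nat \<Rightarrow> nat set) \<Rightarrow>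
   (nat \<Rightarrow> nat \<Rightarrow> nat \<Rightarrow> real) \<Rightarrow> (nat \<Rightarrow> nat \<Rightarrow> nat \<Rightarrow> nat) \<Rightarrow> (nat \<Rightarrow> nat \<Rightarrow> nat \<Rightarrow> nat) \<Rightarrow> bool"
where
  "alg2_exec V E f a c L A adv x xh tau M v d ph \<longleftrightarrow>
    (\<forall>k. x (Suc k) = a * x k) \<and>
    (\<forall>i\<in>V - A. c i \<noteq> 0 \<longrightarrow>
       (\<forall>k. tau i k = Some 0 \<and>
            xh i (Suc k) = a * xh i k + L i * (c i * x k - c i * xh i k))) \<and>
    (\<forall>i\<in>V - A. c i = 0 \<longrightarrow>
       tau i 0 = None \<and> M i 0 = {} \<and>
       (\<forall>k. nonsource_step f a k (in_nbrs (E k) i) (\<lambda>l. reported A adv xh tau k l i)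
              (xh i k) (tau i k) (M i k) (v i k) (d i k) (ph i k)
              (xh i (Suc k)) (tau i (Suc k)) (M i (Suc k)) (v i (Suc k)) (d i (Suc k)) (ph i (Suc k))))"

end

theory Submission
  imports Defs
begin


lemma ns_none_nofire:
  assumes "nonsource_step f a k Nb m x None M v d ph x1 \<tau>1 M1 v1 d1 ph1"
    and "card M + card (J_set Nb k m - M) < 2*f+1"
  shows "M1 = M \<union> J_set Nb k m \<and> \<tau>1 = None \<and> x1 = a*x \<and>
    (\<forall>l\<in>M. v1 l = v l \<and> d1 l = d l + 1 \<and> ph1 l = ph l) \<and>
    (\<forall>l\<in>J_set Nb k m - M. v1 l = rx (m l) \<and> d1 l = rt (m l) + 1 \<and> ph1 l = k)"
  using assms unfolding nonsource_step_def Let_def by auto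

lemma ns_none_fire:
  assumes "nonsource_step f a k Nb m x None M v d ph x1 \<tau>1 M1 v1 d1 ph1"
    and "\<not> card M + card (J_set Nb k m - M) < 2*f+1"
  shows "\<exists>B v' d' ph'. B \<subseteq> J_set Nb k m - M \<and> card B = 2*f+1 - card M \<and> M1 = M \<union> B \<and>
    (\<forall>l\<in>M \<union> B. v1 l = v' l \<and> d1 l = d' l + 1 \<and> ph1 l = ph' l) \<and>
    (\<forall>l\<in>M. v' l = v l \<and> d' l = d l \<and> ph' l = ph l) \<and>
    (\<forall>l\<in>B. v' l = rx (m l) \<and> d' l = rt (m l) \<and> ph' l = k) \<and>
    \<tau>1 = filt_tau (M \<union> B) d' \<and> x1 = filt_x f a k (M \<union> B) v' ph'"
  using assms unfolding nonsource_step_def Let_def by auto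

lemma ns_some:
  assumes "nonsource_step f a k Nb m x (Some t0) M v d ph x1 \<tau>1 M1 v1 d1 ph1"
  defines "J \<equiv> J_set Nb k m"
  defines "R \<equiv> {l \<in> J \<inter> M. rt (m l) < d l}"
  defines "dr \<equiv> (\<lambda>l. if l \<in> R then rt (m l) else d l)"
  defines "idx \<equiv> (\<lambda>l. if l \<in> M then dr l else rt (m l))"
  shows "\<exists>v' d' ph'. (\<forall>l\<in>M1. v1 l = v' l \<and> d1 l = d' l + 1 \<and> ph1 l = ph' l) \<and>
    M1 \<subseteq> M \<union> J \<and> card M1 = 2*f+1 \<and>
    (\<forall>l\<in>M1. \<forall>l'\<in>(M \<union> J) - M1. idx l \<le> idx l') \<and>
    (\<forall>l\<in>M1 \<inter> M. v' l = (if l \<in> R then rx (m l) else v l)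
        \<and> d' l = dr l \<and> ph' l = (if l \<in> R then k else ph l)) \<and>
    (\<forall>l\<in>M1 - M. v' l = rx (m l) \<and> d' l = rt (m l) \<and> ph' l = k) \<and>
    \<tau>1 = filt_tau M1 d' \<and> x1 = filt_x f a k M1 v' ph'"
proof -
  from assms(1) obtain M' v' d' ph' where
    h: "M1 = M' \<and> (\<forall>l\<in>M'. v1 l = v' l \<and> d1 l = d' l + 1 \<and> ph1 l = ph' l) \<and>
      M' \<subseteq> M \<union> J \<and> card M' = 2*f+1 \<and>
      (\<forall>l\<in>M'. \<forall>l'\<in>(M \<union> J) - M'. idx l \<le> idx l') \<and>
    (\<forall>l\<in>M' \<inter> M. v' l = (if l \<in> R then rx (m l) else v l)
        \<and> d' l = dr l \<and> ph' l = (if l \<in> R then k else ph l)) \<and>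
    (\<forall>l\<in>M' - M. v' l = rx (m l) \<and> d' l = rt (m l) \<and> ph' l = k) \<and>
    \<tau>1 = filt_tau M' d' \<and> x1 = filt_x f a k M' v' ph'"
    using assms(1) unfolding nonsource_step_def J_def R_def dr_def idx_def
    by (simp only: Let_def option.case) blast
  then show ?thesis by blast
qed




lemma filt_count:
  assumes "finite S"
  shows "length (filter P (sort (map w (sorted_list_of_set S)))) = card {l\<in>S. P (w l)}"
proof -
  have "length (filter P (sort (map w (sorted_list_of_set S)))) =
        length (filter P (map w (sorted_list_of_set S)))"
    by (simp add: filter_sort)
  also have "\<dots> = length (filter (P \<circ> w) (sorted_list_of_set S))"
    by (simp add: filter_map)
  also have "\<dots> = card (set (filter (P \<circ> w) (sorted_list_of_set S)))"
    by (metis distinct_card distinct_filter distinct_sorted_list_of_set)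
  also have "set (filter (P \<circ> w) (sorted_list_of_set S)) = {l\<in>S. P (w l)}"
    using assms by auto
  finally show ?thesis .
qed

lemma sorted_upper_count:
  assumes "sorted xs" "length xs = 2*f+1" "P (xs!f)" "\<And>y z. P y \<Longrightarrow> y \<le> z \<Longrightarrow> P z"
  shows "f+1 \<le> length (filter P xs)"
proof -
  have "{f..<2*f+1} \<subseteq> {i. i < length xs \<and> P (xs!i)}"
  proof
    fix j assume "j \<in> {f..<2*f+1}"
    then have "f \<le> j" "j < length xs" using assms(2) by auto
    then have "xs!f \<le> xs!j" using sorted_nth_mono[OF assms(1)] by blast
    then show "j \<in> {i. i < length xs \<and> P (xs!i)}" using assms(3,4) \<open>j < length xs\<close> by blast
  qed
  then have "card {f..<2*f+1} \<le> card {i. i < length xs \<and> P (xs!i)}"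
    by (intro card_mono) auto
  then show ?thesis by (simp add: length_filter_conv_card)
qed

lemma sorted_lower_count:
  assumes "sorted xs" "length xs = 2*f+1" "P (xs!f)" "\<And>y z. P y \<Longrightarrow> z \<le> y \<Longrightarrow> P z"
  shows "f+1 \<le> length (filter P xs)"
proof -
  have "{0..<f+1} \<subseteq> {i. i < length xs \<and> P (xs!i)}"
  proof
    fix j assume "j \<in> {0..<f+1}"
    then have "j \<le> f" "f < length xs" "j < length xs" using assms(2) by auto
    then have "xs!j \<le> xs!f" using sorted_nth_mono[OF assms(1)] by blast
    then show "j \<in> {i. i < length xs \<and> P (xs!i)}" using assms(3,4) \<open>j < length xs\<close> by blast
  qed
  then have "card {0..<f+1} \<le> card {i. i < length xs \<and> P (xs!i)}"
    by (intro card_mono) auto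
  then show ?thesis by (simp add: length_filter_conv_card)
qed

lemma median_bound:
  fixes w :: "nat \<Rightarrow> real"
  assumes fin: "finite S" and cS: "card S = 2*f+1" and cA: "card (S \<inter> A) \<le> f"
    and good: "\<And>l. l \<in> S \<Longrightarrow> l \<notin> A \<Longrightarrow> \<bar>w l - X\<bar> \<le> B"
  shows "\<bar>sort (map w (sorted_list_of_set S)) ! f - X\<bar> \<le> B"
proof -
  define xs where "xs = sort (map w (sorted_list_of_set S))"
  have len: "length xs = 2*f+1" using cS fin by (simp add: xs_def length_sorted_list_of_set)
  have so: "sorted xs" by (simp add: xs_def)
  have up: "\<not> xs!f > X + B"
  proof
    assume h: "xs!f > X + B"
    have "f+1 \<le> length (filter (\<lambda>y. y > X + B) xs)"
      by (rule sorted_upper_count[OF so len]) (use h in auto)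
    also have "\<dots> = card {l\<in>S. w l > X + B}" unfolding xs_def by (rule filt_count[OF fin])
    also have "\<dots> \<le> card (S \<inter> A)"
      apply (rule card_mono) using fin apply simp
      using good by fastforce
    finally show False using cA by simp
  qed
  have lo: "\<not> xs!f < X - B"
  proof
    assume h: "xs!f < X - B"
    have "f+1 \<le> length (filter (\<lambda>y. y < X - B) xs)"
      by (rule sorted_lower_count[OF so len]) (use h in auto)
    also have "\<dots> = card {l\<in>S. w l < X - B}" unfolding xs_def by (rule filt_count[OF fin])
    also have "\<dots> \<le> card (S \<inter> A)"
      apply (rule card_mono) using fin apply simp
      using good by fastforce
    finally show False using cA by simp
  qed
  from up lo show ?thesis unfolding xs_def[symmetric] by linarith
qed




locale ex2 =
  fixes V :: "nat set" and E :: "nat \<Rightarrow> (nat \<times> nat) set" and f :: nat and a :: real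
    and c :: "nat \<Rightarrow> real" and L :: "nat \<Rightarrow> real" and A :: "nat set"
    and adv :: "nat \<Rightarrow> nat \<Rightarrow> nat \<Rightarrow> msg" and x :: "nat \<Rightarrow> real"
    and xh :: "nat \<Rightarrow> nat \<Rightarrow> real" and tau :: "nat \<Rightarrow> nat \<Rightarrow> nat option"
    and M :: "nat \<Rightarrow> nat \<Rightarrow> nat set" and v :: "nat \<Rightarrow> nat \<Rightarrow> nat \<Rightarrow> real"
    and d :: "nat \<Rightarrow> nat \<Rightarrow> nat \<Rightarrow> nat" and ph :: "nat \<Rightarrow> nat \<Rightarrow> nat \<Rightarrow> nat"
  assumes finV: "finite V" and EV: "\<And>k. E k \<subseteq> V \<times> V" and AV: "A \<subseteq> V"
    and cardA: "card A \<le> f"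
    and exe: "alg2_exec V E f a c L A adv x xh tau M v d ph"
begin

definition msg where "msg i k l = reported A adv xh tau k l i"
definition Jn where "Jn i k = J_set (in_nbrs (E k) i) k (\<lambda>l. msg i k l)"

lemma xstep: "x (Suc k) = a * x k"
  using exe unfolding alg2_exec_def by blast

lemma xpow: "x (j + s) = a ^ s * x j"
  by (induction s) (auto simp: xstep)

lemma src: "i \<in> V - A \<Longrightarrow> c i \<noteq> 0 \<Longrightarrow> tau i k = Some 0 \<and>
   xh i (Suc k) = a * xh i k + L i * (c i * x k - c i * xh i k)"
  using exe unfolding alg2_exec_def by blast

lemma ns0: "i \<in> V - A \<Longrightarrow> c i = 0 \<Longrightarrow> tau i 0 = None \<and> M i 0 = {}"
  using exe unfolding alg2_exec_def by blast

lemma nsstep: "i \<in> V - A \<Longrightarrow> c i = 0 \<Longrightarrow>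
  nonsource_step f a k (in_nbrs (E k) i) (msg i k)
              (xh i k) (tau i k) (M i k) (v i k) (d i k) (ph i k)
              (xh i (Suc k)) (tau i (Suc k)) (M i (Suc k)) (v i (Suc k)) (d i (Suc k)) (ph i (Suc k))"
proof -
  assume "i \<in> V - A" "c i = 0"
  then show ?thesis using exe unfolding alg2_exec_def msg_def[abs_def] by blast
qed

lemma nbrs_sub: "in_nbrs (E k) i \<subseteq> V"
  using EV unfolding in_nbrs_def by blast

lemma Jn_sub: "Jn i k \<subseteq> V"
  using nbrs_sub unfolding Jn_def J_set_def by blast

lemma Jn_fin: "finite (Jn i k)"
  using Jn_sub finV finite_subset by blast

lemma Jn_rt: "l \<in> Jn i k \<Longrightarrow> rt (msg i k l) \<le> k"
  unfolding Jn_def J_set_def rt_def by auto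

lemma Jn_reg: "l \<in> Jn i k \<Longrightarrow> l \<notin> A \<Longrightarrow> tau l k = Some (rt (msg i k l)) \<and> rx (msg i k l) = xh l k"
  unfolding Jn_def J_set_def rt_def rx_def msg_def reported_def by auto

lemma Jn_intro: "l \<in> in_nbrs (E k) i \<Longrightarrow> l \<notin> A \<Longrightarrow> tau l k = Some t \<Longrightarrow> t \<le> k \<Longrightarrow>
   l \<in> Jn i k \<and> rt (msg i k l) = t"
  unfolding Jn_def J_set_def rt_def rx_def msg_def reported_def by auto

definition GE where
  "GE k l vv dd pp \<longleftrightarrow> pp \<le> k \<and> (\<exists>t. dd = t + (k - pp) \<and> t \<le> pp \<and>
      (l \<notin> A \<longrightarrow> tau l pp = Some t \<and> vv = xh l pp))"

lemma GE_new: "l \<in> Jn i k \<Longrightarrow> GE k l (rx (msg i k l)) (rt (msg i k l)) k"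
  unfolding GE_def using Jn_rt Jn_reg by auto

lemma GE_suc: assumes "GE k l vv dd pp" shows "GE (Suc k) l vv (dd+1) pp"
proof -
  obtain t where h: "pp \<le> k" "dd = t + (k - pp)" "t \<le> pp" "l \<notin> A \<longrightarrow> tau l pp = Some t \<and> vv = xh l pp"
    using assms unfolding GE_def by blast
  have "dd + 1 = t + (Suc k - pp)" using h(1,2) by (simp add: Suc_diff_le)
  then show ?thesis unfolding GE_def using h by auto
qed

lemma GE_le: "GE k l vv dd pp \<Longrightarrow> dd \<le> k"
  unfolding GE_def by auto

definition Inv where
  "Inv i k \<longleftrightarrow> finite (M i k) \<and> M i k \<subseteq> V \<and>
    (tau i k = None \<longrightarrow> card (M i k) < 2*f+1) \<and>
    (tau i k \<noteq> None \<longrightarrow> card (M i k) = 2*f+1 \<and> tau i k = Some (Max (d i k ` M i k))) \<and>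
    (\<forall>l\<in>M i k. ph i k l < k \<and> GE k l (v i k l) (d i k l) (ph i k l))"

lemma Max_plus1:
  fixes g h :: "nat \<Rightarrow> nat"
  assumes "finite S" "S \<noteq> {}" "\<forall>l\<in>S. g l = h l + 1"
  shows "Max (g ` S) = Max (h ` S) + 1"
proof -
  have "g ` S = (\<lambda>y. y + 1) ` (h ` S)" using assms(3) by (auto simp: image_image intro!: image_cong)
  moreover have "Max ((\<lambda>y. y + 1) ` (h ` S)) = Max (h ` S) + 1"
    using mono_Max_commute[of "\<lambda>y::nat. y+1" "h ` S"] assms(1,2) by (simp add: mono_def)
  ultimately show ?thesis by simp
qed

lemma Jn_eq: "J_set (in_nbrs (E k) i) k (msg i k) = Jn i k"
  unfolding Jn_def by (simp add: eta_contract_eq)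

lemma step_info:
  assumes i: "i \<in> V - A" "c i = 0" and inv: "Inv i k"
  shows "\<exists>v' d' ph'. (\<forall>l\<in>M i (Suc k). v i (Suc k) l = v' l \<and> d i (Suc k) l = d' l + 1 \<and> ph i (Suc k) l = ph' l)
   \<and> (\<forall>l\<in>M i (Suc k). GE k l (v' l) (d' l) (ph' l)) \<and> M i (Suc k) \<subseteq> M i k \<union> Jn i k \<and>
   ((tau i k = None \<and> tau i (Suc k) = None \<and> M i (Suc k) = M i k \<union> Jn i k \<and>
       card (M i k \<union> Jn i k) < 2*f+1) \<or>
    (card (M i (Suc k)) = 2*f+1 \<and> tau i (Suc k) = filt_tau (M i (Suc k)) d' \<and>
       xh i (Suc k) = filt_x f a k (M i (Suc k)) v' ph'))"
proof -
  note st = nsstep[OF i, of k]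
  have finM: "finite (M i k)" and MV: "M i k \<subseteq> V" using inv unfolding Inv_def by auto
  have oldGE: "\<And>l. l \<in> M i k \<Longrightarrow> GE k l (v i k l) (d i k l) (ph i k l)"
    using inv unfolding Inv_def by auto
  have cardU: "card (M i k \<union> Jn i k) = card (M i k) + card (Jn i k - M i k)"
  proof -
    have "M i k \<union> Jn i k = M i k \<union> (Jn i k - M i k)" by blast
    then show ?thesis using finM Jn_fin[of i k] card_Un_disjoint[of "M i k" "Jn i k - M i k"] by simp
  qed
  show ?thesis
  proof (cases "tau i k")
    case None
    note st' = st[unfolded None Jn_eq]
    show ?thesis
    proof (cases "card (M i k) + card (Jn i k - M i k) < 2*f+1")
      case True
      note h = ns_none_nofire[OF st'[unfolded Jn_eq] True[folded Jn_eq], unfolded Jn_eq]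
      define v' where "v' l = (if l \<in> M i k then v i k l else rx (msg i k l))" for l
      define d' where "d' l = (if l \<in> M i k then d i k l else rt (msg i k l))" for l
      define ph' where "ph' l = (if l \<in> M i k then ph i k l else k)" for l
      show ?thesis
        apply (rule exI[of _ v'], rule exI[of _ d'], rule exI[of _ ph'])
        using h None True cardU oldGE GE_new unfolding v'_def d'_def ph'_def by auto
    next
      case False
      obtain B v' d' ph' where h: "B \<subseteq> Jn i k - M i k" "card B = 2*f+1 - card (M i k)"
        "M i (Suc k) = M i k \<union> B"
        "\<forall>l\<in>M i k \<union> B. v i (Suc k) l = v' l \<and> d i (Suc k) l = d' l + 1 \<and> ph i (Suc k) l = ph' l"
        "\<forall>l\<in>M i k. v' l = v i k l \<and> d' l = d i k l \<and> ph' l = ph i k l"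
        "\<forall>l\<in>B. v' l = rx (msg i k l) \<and> d' l = rt (msg i k l) \<and> ph' l = k"
        "tau i (Suc k) = filt_tau (M i k \<union> B) d'" "xh i (Suc k) = filt_x f a k (M i k \<union> B) v' ph'"
        using ns_none_fire[OF st' False[folded Jn_eq], unfolded Jn_eq] by blast
      have lt: "card (M i k) < 2*f+1" using inv None unfolding Inv_def by auto
      have finB: "finite B" using h(1) Jn_fin finite_subset by blast
      have "card (M i k \<union> B) = card (M i k) + card B"
        using finM finB h(1) by (intro card_Un_disjoint) auto
      then have c: "card (M i (Suc k)) = 2*f+1" using h(2,3) lt by simp
      show ?thesis
        apply (rule exI[of _ v'], rule exI[of _ d'], rule exI[of _ ph'])
        using h c oldGE GE_new by auto
    qed
  next
    case (Some t0)
    note st' = st[unfolded Some]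
    obtain v' d' ph' where h:
      "\<forall>l\<in>M i (Suc k). v i (Suc k) l = v' l \<and> d i (Suc k) l = d' l + 1 \<and> ph i (Suc k) l = ph' l"
      "M i (Suc k) \<subseteq> M i k \<union> Jn i k" "card (M i (Suc k)) = 2*f+1"
      "\<forall>l\<in>M i (Suc k) \<inter> M i k. v' l = (if l \<in> {l \<in> Jn i k \<inter> M i k. rt (msg i k l) < d i k l} then rx (msg i k l) else v i k l)
        \<and> d' l = (if l \<in> {l \<in> Jn i k \<inter> M i k. rt (msg i k l) < d i k l} then rt (msg i k l) else d i k l)
        \<and> ph' l = (if l \<in> {l \<in> Jn i k \<inter> M i k. rt (msg i k l) < d i k l} then k else ph i k l)"
      "\<forall>l\<in>M i (Suc k) - M i k. v' l = rx (msg i k l) \<and> d' l = rt (msg i k l) \<and> ph' l = k"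
      "tau i (Suc k) = filt_tau (M i (Suc k)) d'" "xh i (Suc k) = filt_x f a k (M i (Suc k)) v' ph'"
      using ns_some[OF st'] unfolding Jn_eq by blast
    have ge: "\<forall>l\<in>M i (Suc k). GE k l (v' l) (d' l) (ph' l)"
    proof
      fix l assume l: "l \<in> M i (Suc k)"
      show "GE k l (v' l) (d' l) (ph' l)"
      proof (cases "l \<in> M i k")
        case True
        then show ?thesis using h(4) l oldGE[OF True] GE_new[of l i k] by (auto split: if_splits)
      next
        case False
        then have "l \<in> Jn i k" using h(2) l by blast
        then show ?thesis using h(5) l False GE_new[of l i k] by auto
      qed
    qed
    show ?thesis
      apply (rule exI[of _ v'], rule exI[of _ d'], rule exI[of _ ph'])
      using h ge by auto
  qed
qed

lemma Inv_step:
  assumes i: "i \<in> V - A" "c i = 0" and inv: "Inv i k"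
  shows "Inv i (Suc k)"
proof -
  obtain v' d' ph' where h:
    "\<forall>l\<in>M i (Suc k). v i (Suc k) l = v' l \<and> d i (Suc k) l = d' l + 1 \<and> ph i (Suc k) l = ph' l"
    "\<forall>l\<in>M i (Suc k). GE k l (v' l) (d' l) (ph' l)" "M i (Suc k) \<subseteq> M i k \<union> Jn i k"
    "(tau i k = None \<and> tau i (Suc k) = None \<and> M i (Suc k) = M i k \<union> Jn i k \<and>
       card (M i k \<union> Jn i k) < 2*f+1) \<or>
    (card (M i (Suc k)) = 2*f+1 \<and> tau i (Suc k) = filt_tau (M i (Suc k)) d' \<and>
       xh i (Suc k) = filt_x f a k (M i (Suc k)) v' ph')"
    using step_info[OF i inv] by blast
  have MV: "M i (Suc k) \<subseteq> V" using h(3) inv Jn_sub unfolding Inv_def by blast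
  have fin: "finite (M i (Suc k))" using MV finV finite_subset by blast
  have ent: "\<forall>l\<in>M i (Suc k). ph i (Suc k) l < Suc k \<and> GE (Suc k) l (v i (Suc k) l) (d i (Suc k) l) (ph i (Suc k) l)"
  proof
    fix l assume l: "l \<in> M i (Suc k)"
    have g: "GE k l (v' l) (d' l) (ph' l)" using h(2) l by blast
    then have "ph' l < Suc k" unfolding GE_def by auto
    then show "ph i (Suc k) l < Suc k \<and> GE (Suc k) l (v i (Suc k) l) (d i (Suc k) l) (ph i (Suc k) l)"
      using GE_suc[OF g] h(1) l by auto
  qed
  show ?thesis
    using h(4)
  proof
    assume "tau i k = None \<and> tau i (Suc k) = None \<and> M i (Suc k) = M i k \<union> Jn i k \<and>
       card (M i k \<union> Jn i k) < 2*f+1"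
    then show ?thesis using MV fin ent unfolding Inv_def by auto
  next
    assume c: "card (M i (Suc k)) = 2*f+1 \<and> tau i (Suc k) = filt_tau (M i (Suc k)) d' \<and>
       xh i (Suc k) = filt_x f a k (M i (Suc k)) v' ph'"
    have ne: "M i (Suc k) \<noteq> {}" using c by auto
    have "Max (d i (Suc k) ` M i (Suc k)) = Max (d' ` M i (Suc k)) + 1"
      by (rule Max_plus1[OF fin ne]) (use h(1) in auto)
    then have "tau i (Suc k) = Some (Max (d i (Suc k) ` M i (Suc k)))"
      using c unfolding filt_tau_def by simp
    then show ?thesis using MV fin ent c unfolding Inv_def by auto
  qed
qed

lemma Inv_all: "i \<in> V - A \<Longrightarrow> c i = 0 \<Longrightarrow> Inv i k"
proof (induction k)
  case 0
  then show ?case using ns0[OF 0(1,2)] unfolding Inv_def by auto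
next
  case (Suc k)
  then show ?case using Inv_step by blast
qed

end



fun Gf :: "real \<Rightarrow> real \<Rightarrow> nat \<Rightarrow> real" where
  "Gf Q G0 0 = G0"
| "Gf Q G0 (Suc t) = Q ^ Suc t * Gf Q G0 t"

lemma Gf_nonneg: "1 \<le> Q \<Longrightarrow> 0 \<le> G0 \<Longrightarrow> 0 \<le> Gf Q G0 t"
  by (induction t) auto

lemma Gf_mono: assumes "1 \<le> Q" "0 \<le> G0" "s \<le> t" shows "Gf Q G0 s \<le> Gf Q G0 t"
proof -
  have "Gf Q G0 n \<le> Gf Q G0 (Suc n)" for n
  proof -
    have "1 * Gf Q G0 n \<le> Q ^ Suc n * Gf Q G0 n"
      using assms(1,2) Gf_nonneg[OF assms(1,2)] by (intro mult_right_mono one_le_power) auto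
    then show ?thesis by simp
  qed
  then show ?thesis using lift_Suc_mono_le[of "Gf Q G0"] assms(3) by blast
qed

lemma arith1:
  fixes a Aa \<rho> g :: real
  assumes "0 < \<rho>" "\<rho> \<le> 1" "\<bar>a\<bar> \<le> Aa" "1 \<le> Aa" "s \<le> T" "s \<le> k" "0 \<le> g"
  shows "\<bar>a\<bar> ^ s * g * \<rho> ^ (k - s) \<le> (Aa/\<rho>) ^ T * g * \<rho> ^ k"
proof -
  have Q1: "1 \<le> Aa/\<rho>" using assms by (simp add: le_divide_eq)
  have rk: "\<rho> ^ k = \<rho> ^ (k - s) * \<rho> ^ s" using assms(6) by (simp add: power_add[symmetric])
  have "\<bar>a\<bar> ^ s * g * \<rho> ^ (k - s) \<le> Aa ^ s * g * \<rho> ^ (k - s)"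
    using assms by (intro mult_right_mono power_mono) auto
  also have "Aa ^ s = (Aa/\<rho>) ^ s * \<rho> ^ s" using assms(1) by (simp add: power_divide)
  also have "(Aa/\<rho>) ^ s * \<rho> ^ s * g * \<rho> ^ (k - s) = (Aa/\<rho>) ^ s * g * \<rho> ^ k"
    using rk by simp
  also have "\<dots> \<le> (Aa/\<rho>) ^ T * g * \<rho> ^ k"
    using assms Q1 by (intro mult_right_mono power_increasing) auto
  finally show ?thesis .
qed

context ex2
begin

lemma src_err:
  assumes i: "i \<in> V - A" "c i \<noteq> 0" and Lr: "a - L i * c i = \<rho>"
  shows "xh i k - x k = \<rho> ^ k * (xh i 0 - x 0)"
proof (induction k)
  case 0 then show ?case by simp
next
  case (Suc k)
  have "xh i (Suc k) - x (Suc k) = (a - L i * c i) * (xh i k - x k)"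
    using src[OF i, of k] xstep[of k] by (simp add: algebra_simps)
  then show ?case using Suc Lr by simp
qed

lemma err:
  assumes r: "0 < \<rho>" "\<rho> < 1" and Lr: "\<And>i. c i \<noteq> 0 \<Longrightarrow> a - L i * c i = \<rho>"
  defines "Aa \<equiv> max 1 \<bar>a\<bar>"
  defines "G0 \<equiv> (\<Sum>i\<in>V. \<bar>xh i 0 - x 0\<bar>)"
  shows "i \<in> V - A \<Longrightarrow> tau i k = Some t \<Longrightarrow> \<bar>xh i k - x k\<bar> \<le> Gf (Aa/\<rho>) G0 t * \<rho> ^ k"
proof (induction k arbitrary: i t rule: less_induct)
  case (less k)
  define Q where "Q = Aa/\<rho>"
  have Q1: "1 \<le> Q" unfolding Q_def Aa_def using r by (simp add: le_divide_eq)
  have G0: "0 \<le> G0" unfolding G0_def by (simp add: sum_nonneg)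
  show ?case
  proof (cases "c i = 0")
    case False
    have "\<bar>xh i k - x k\<bar> = \<bar>\<rho> ^ k * (xh i 0 - x 0)\<bar>"
      using src_err[OF less(2) False Lr[OF False]] by (rule arg_cong)
    also have "\<dots> = \<bar>\<rho> ^ k\<bar> * \<bar>xh i 0 - x 0\<bar>" by (rule abs_mult)
    also have "\<bar>\<rho> ^ k\<bar> = \<rho> ^ k" using r by simp
    also have "\<bar>xh i 0 - x 0\<bar> \<le> G0"
      unfolding G0_def using less(2) finV by (intro member_le_sum) auto
    also have "G0 \<le> Gf Q G0 t" using Gf_mono[OF Q1 G0, of 0 t] by simp
    finally show ?thesis using r unfolding Q_def by (simp add: mult.commute)
  next
    case True
    show ?thesis
    proof (cases k)
      case 0
      then show ?thesis using ns0[OF less(2) True] less(3) by simp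
    next
      case (Suc k')
      obtain v' d' ph' where h:
        "\<forall>l\<in>M i (Suc k'). v i (Suc k') l = v' l \<and> d i (Suc k') l = d' l + 1 \<and> ph i (Suc k') l = ph' l"
        "\<forall>l\<in>M i (Suc k'). GE k' l (v' l) (d' l) (ph' l)" "M i (Suc k') \<subseteq> M i k' \<union> Jn i k'"
        "(tau i k' = None \<and> tau i (Suc k') = None \<and> M i (Suc k') = M i k' \<union> Jn i k' \<and>
           card (M i k' \<union> Jn i k') < 2*f+1) \<or>
        (card (M i (Suc k')) = 2*f+1 \<and> tau i (Suc k') = filt_tau (M i (Suc k')) d' \<and>
           xh i (Suc k') = filt_x f a k' (M i (Suc k')) v' ph')"
        using step_info[OF less(2) True Inv_all[OF less(2) True]] by blast
      define M' where "M' = M i (Suc k')"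
      have c: "card M' = 2*f+1" and tt: "tau i (Suc k') = filt_tau M' d'"
        and xx: "xh i (Suc k') = filt_x f a k' M' v' ph'"
        using h(4) less(3) Suc unfolding M'_def by auto
      have MV: "M' \<subseteq> V" using Inv_all[OF less(2) True, of "Suc k'"] unfolding Inv_def M'_def by auto
      have fin: "finite M'" using MV finV finite_subset by blast
      define t' where "t' = Max (d' ` M')"
      have tdef: "t = Suc t'" using tt less(3) Suc unfolding filt_tau_def t'_def by simp
      define w where "w l = a ^ (k' - ph' l) * v' l" for l
      have wb: "\<bar>w l - x k'\<bar> \<le> Q ^ t' * Gf Q G0 t' * \<rho> ^ k'" if l: "l \<in> M'" "l \<notin> A" for l
      proof -
        obtain \<tau>l where g: "ph' l \<le> k'" "d' l = \<tau>l + (k' - ph' l)" "\<tau>l \<le> ph' l"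
          "tau l (ph' l) = Some \<tau>l" "v' l = xh l (ph' l)"
          using h(2) l unfolding GE_def M'_def by blast
        have dle: "d' l \<le> t'" unfolding t'_def using fin l by auto
        define s where "s = k' - ph' l"
        have xk: "x k' = a ^ s * x (ph' l)" using xpow[of "ph' l" s] g(1) unfolding s_def by simp
        have lv: "l \<in> V - A" using l MV by blast
        have IH: "\<bar>xh l (ph' l) - x (ph' l)\<bar> \<le> Gf Q G0 \<tau>l * \<rho> ^ (ph' l)"
          using less(1)[of "ph' l" l \<tau>l] lv g(4) g(1) Suc unfolding Q_def by simp
        have "\<bar>w l - x k'\<bar> = \<bar>a\<bar> ^ s * \<bar>xh l (ph' l) - x (ph' l)\<bar>"
          unfolding w_def xk g(5) s_def[symmetric] by (simp add: right_diff_distrib[symmetric] abs_mult power_abs)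
        also have "\<dots> \<le> \<bar>a\<bar> ^ s * (Gf Q G0 t' * \<rho> ^ (ph' l))"
          apply (rule mult_left_mono)
           apply (rule order.trans[OF IH])
          apply (rule mult_right_mono)
          using Gf_mono[OF Q1 G0, of \<tau>l t'] g dle r by auto
        also have "\<dots> = \<bar>a\<bar> ^ s * Gf Q G0 t' * \<rho> ^ (k' - s)"
          using g(1) unfolding s_def by simp
        also have "\<dots> \<le> Q ^ t' * Gf Q G0 t' * \<rho> ^ k'"
          unfolding Q_def
          apply (rule arith1)
          using r g dle Gf_nonneg[OF Q1 G0] unfolding Aa_def s_def Q_def by auto
        finally show ?thesis .
      qed
      have cA: "card (M' \<inter> A) \<le> f"
        using cardA card_mono[of A "M' \<inter> A"] AV finV finite_subset by fastforce
      have med: "\<bar>sort (map w (sorted_list_of_set M')) ! f - x k'\<bar> \<le> Q ^ t' * Gf Q G0 t' * \<rho> ^ k'"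
        by (rule median_bound[OF fin c cA]) (use wb in auto)
      have "\<bar>xh i (Suc k') - x (Suc k')\<bar> = \<bar>a\<bar> * \<bar>sort (map w (sorted_list_of_set M')) ! f - x k'\<bar>"
        unfolding xx filt_x_def xstep w_def by (simp add: right_diff_distrib[symmetric] abs_mult)
      also have "\<dots> \<le> Aa * (Q ^ t' * Gf Q G0 t' * \<rho> ^ k')"
        using med unfolding Aa_def by (intro mult_mono) auto
      also have "\<dots> = Gf Q G0 t * \<rho> ^ k"
        unfolding tdef Suc Q_def using r by (simp add: field_simps)
      finally show ?thesis unfolding Q_def Suc .
    qed
  qed
qed

end



context ex2
begin

lemma some_pers:
  assumes i: "i \<in> V - A" and s: "tau i k \<noteq> None" shows "tau i (Suc k) \<noteq> None"
proof (cases "c i = 0")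
  case True
  obtain v' d' ph' where h:
    "(tau i k = None \<and> tau i (Suc k) = None \<and> M i (Suc k) = M i k \<union> Jn i k \<and>
       card (M i k \<union> Jn i k) < 2*f+1) \<or>
    (card (M i (Suc k)) = 2*f+1 \<and> tau i (Suc k) = filt_tau (M i (Suc k)) d' \<and>
       xh i (Suc k) = filt_x f a k (M i (Suc k)) v' ph')"
    using step_info[OF i True Inv_all[OF i True]] by blast
  then show ?thesis using s unfolding filt_tau_def by auto
next
  case False
  then show ?thesis using src[OF i False] by simp
qed

lemma some_pers_le:
  assumes i: "i \<in> V - A" and s: "tau i k \<noteq> None" and le: "k \<le> k'" shows "tau i k' \<noteq> None"
  using le
proof (induction k' rule: dec_induct)
  case base then show ?case using s .
next
  case (step n) then show ?case using some_pers[OF i] by blast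
qed

lemma tau_le:
  assumes i: "i \<in> V - A" and s: "tau i k = Some t" shows "t \<le> k"
proof (cases "c i = 0")
  case True
  have inv: "Inv i k" using Inv_all[OF i True] .
  then have c: "card (M i k) = 2*f+1" and t: "t = Max (d i k ` M i k)" and fin: "finite (M i k)"
    and ge: "\<forall>l\<in>M i k. GE k l (v i k l) (d i k l) (ph i k l)"
    using s unfolding Inv_def by auto
  have ne: "M i k \<noteq> {}" using c by auto
  have "\<forall>l\<in>M i k. d i k l \<le> k" using ge GE_le by blast
  then show ?thesis unfolding t using fin ne by (simp add: Max_le_iff)
next
  case False
  then show ?thesis using src[OF i False, of k] s by simp
qed

definition idxf where
  "idxf i k l = (if l \<in> M i k then (if l \<in> Jn i k \<and> rt (msg i k l) < d i k l then rt (msg i k l)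
      else d i k l) else rt (msg i k l))"

lemma idx_M: "l \<in> M i k \<Longrightarrow> idxf i k l \<le> d i k l"
  unfolding idxf_def by auto

lemma idx_J: "l \<in> Jn i k \<Longrightarrow> idxf i k l \<le> rt (msg i k l)"
  unfolding idxf_def by auto

lemma some_info:
  assumes i: "i \<in> V - A" "c i = 0" and s: "tau i k = Some t0"
  shows "\<exists>d'. (\<forall>l\<in>M i (Suc k). d i (Suc k) l = d' l + 1) \<and> M i (Suc k) \<subseteq> M i k \<union> Jn i k \<and>
    card (M i (Suc k)) = 2*f+1 \<and>
    (\<forall>l\<in>M i (Suc k). \<forall>l'\<in>(M i k \<union> Jn i k) - M i (Suc k). idxf i k l \<le> idxf i k l') \<and>
    (\<forall>l\<in>M i (Suc k). d' l = idxf i k l)"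
proof -
  note st = nsstep[OF i, of k, unfolded s]
  obtain v' d' ph' where h:
      "\<forall>l\<in>M i (Suc k). v i (Suc k) l = v' l \<and> d i (Suc k) l = d' l + 1 \<and> ph i (Suc k) l = ph' l"
      "M i (Suc k) \<subseteq> M i k \<union> Jn i k" "card (M i (Suc k)) = 2*f+1"
      "\<forall>l\<in>M i (Suc k). \<forall>l'\<in>(M i k \<union> Jn i k) - M i (Suc k).
         (if l \<in> M i k then (if l \<in> {l \<in> Jn i k \<inter> M i k. rt (msg i k l) < d i k l} then rt (msg i k l) else d i k l) else rt (msg i k l))
         \<le> (if l' \<in> M i k then (if l' \<in> {l \<in> Jn i k \<inter> M i k. rt (msg i k l) < d i k l} then rt (msg i k l') else d i k l') else rt (msg i k l'))"
      "\<forall>l\<in>M i (Suc k) \<inter> M i k. d' l = (if l \<in> {l \<in> Jn i k \<inter> M i k. rt (msg i k l) < d i k l} then rt (msg i k l) else d i k l)"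
      "\<forall>l\<in>M i (Suc k) - M i k. d' l = rt (msg i k l)"
    using ns_some[OF st] unfolding Jn_eq by blast
  have e: "\<And>l. (if l \<in> M i k then (if l \<in> {l \<in> Jn i k \<inter> M i k. rt (msg i k l) < d i k l} then rt (msg i k l) else d i k l) else rt (msg i k l)) = idxf i k l"
    unfolding idxf_def by auto
  have "\<forall>l\<in>M i (Suc k). d' l = idxf i k l"
  proof
    fix l assume l: "l \<in> M i (Suc k)"
    show "d' l = idxf i k l"
    proof (cases "l \<in> M i k")
      case True then show ?thesis using h(5) l e[of l] by auto
    next
      case False then show ?thesis using h(6) l unfolding idxf_def by auto
    qed
  qed
  moreover have "\<forall>l\<in>M i (Suc k). \<forall>l'\<in>(M i k \<union> Jn i k) - M i (Suc k). idxf i k l \<le> idxf i k l'"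
    using h(4) unfolding e .
  ultimately show ?thesis using h(1,2,3) by blast
qed

lemma core:
  assumes i: "i \<in> V - A" "c i = 0" and s: "tau i k \<noteq> None"
    and l: "(l \<in> M i k \<and> d i k l \<le> X) \<or> (l \<in> Jn i k \<and> rt (msg i k l) \<le> X)"
  shows "(l \<in> M i (Suc k) \<and> d i (Suc k) l \<le> X+1) \<or> (\<forall>l'\<in>M i (Suc k). d i (Suc k) l' \<le> X+1)"
proof -
  obtain t0 where s': "tau i k = Some t0" using s by auto
  obtain d' where h: "\<forall>l\<in>M i (Suc k). d i (Suc k) l = d' l + 1" "M i (Suc k) \<subseteq> M i k \<union> Jn i k"
    "\<forall>l\<in>M i (Suc k). \<forall>l'\<in>(M i k \<union> Jn i k) - M i (Suc k). idxf i k l \<le> idxf i k l'"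
    "\<forall>l\<in>M i (Suc k). d' l = idxf i k l"
    using some_info[OF i s'] by blast
  have il: "idxf i k l \<le> X" using l idx_M idx_J order.trans by blast
  show ?thesis
  proof (cases "l \<in> M i (Suc k)")
    case True then show ?thesis using h(1,4) il by auto
  next
    case False
    then have "l \<in> (M i k \<union> Jn i k) - M i (Suc k)" using l by blast
    have "\<forall>l'\<in>M i (Suc k). d i (Suc k) l' \<le> X+1"
    proof
      fix l' assume l': "l' \<in> M i (Suc k)"
      have "idxf i k l' \<le> idxf i k l" using h(3) l' \<open>l \<in> (M i k \<union> Jn i k) - M i (Suc k)\<close> by blast
      then show "d i (Suc k) l' \<le> X+1" using h(1,4) l' il by simp
    qed
    then show ?thesis by blast
  qed
qed

lemma maxstep:
  assumes i: "i \<in> V - A" "c i = 0" and s: "tau i k \<noteq> None"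
  shows "\<forall>l'\<in>M i (Suc k). d i (Suc k) l' \<le> Max (d i k ` M i k) + 1"
proof
  fix l' assume l': "l' \<in> M i (Suc k)"
  obtain t0 where s': "tau i k = Some t0" using s by auto
  obtain d' where h: "\<forall>l\<in>M i (Suc k). d i (Suc k) l = d' l + 1" "M i (Suc k) \<subseteq> M i k \<union> Jn i k"
    "card (M i (Suc k)) = 2*f+1"
    "\<forall>l\<in>M i (Suc k). \<forall>l'\<in>(M i k \<union> Jn i k) - M i (Suc k). idxf i k l \<le> idxf i k l'"
    "\<forall>l\<in>M i (Suc k). d' l = idxf i k l"
    using some_info[OF i s'] by blast
  have inv: "Inv i k" using Inv_all[OF i] .
  then have cM: "card (M i k) = 2*f+1" and finM: "finite (M i k)" using s unfolding Inv_def by auto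
  have finM1: "finite (M i (Suc k))" using h(3) card_ge_0_finite by force
  have dmax: "\<And>m. m \<in> M i k \<Longrightarrow> d i k m \<le> Max (d i k ` M i k)" using finM by auto
  have "idxf i k l' \<le> Max (d i k ` M i k)"
  proof (cases "l' \<in> M i k")
    case True then show ?thesis using idx_M dmax order.trans by blast
  next
    case False
    have "\<not> M i k \<subseteq> M i (Suc k)"
    proof
      assume sub: "M i k \<subseteq> M i (Suc k)"
      then have "M i k = M i (Suc k)" using card_seteq[OF finM1 sub] cM h(3) by simp
      then show False using False l' by simp
    qed
    then obtain m0 where m0: "m0 \<in> M i k" "m0 \<notin> M i (Suc k)" by blast
    then have "idxf i k l' \<le> idxf i k m0" using h(4) l' by blast
    then show ?thesis using idx_M[OF m0(1)] dmax[OF m0(1)] by linarith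
  qed
  then show "d i (Suc k) l' \<le> Max (d i k ` M i k) + 1" using h(1,5) l' by simp
qed

lemma tau_Max:
  assumes i: "i \<in> V - A" "c i = 0" and s: "tau i k \<noteq> None"
  shows "tau i k = Some (Max (d i k ` M i k)) \<and> finite (M i k) \<and> M i k \<noteq> {} \<and> card (M i k) = 2*f+1"
  using Inv_all[OF i, of k] s unfolding Inv_def by auto

lemma tau_step_le:
  assumes i: "i \<in> V - A" and s: "tau i k = Some t"
  shows "\<exists>t'. tau i (Suc k) = Some t' \<and> t' \<le> t + 1"
proof (cases "c i = 0")
  case True
  have s1: "tau i (Suc k) \<noteq> None" using some_pers[OF i] s by simp
  note A0 = tau_Max[OF i True, of k] and A1 = tau_Max[OF i True s1]
  have "\<forall>l'\<in>M i (Suc k). d i (Suc k) l' \<le> t + 1" using maxstep[OF i True] s A0 by simp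
  then have "Max (d i (Suc k) ` M i (Suc k)) \<le> t + 1" using A1 by (simp add: Max_le_iff)
  then show ?thesis using A1 by blast
next
  case False
  then show ?thesis using src[OF i False] by simp
qed

end



context ex2
begin

lemma none_before:
  assumes i: "i \<in> V - A" and s: "tau i k' = None" and le: "n \<le> k'" shows "tau i n = None"
  using some_pers_le[OF i _ le] s by blast

lemma none_step:
  assumes i: "i \<in> V - A" "c i = 0" and s: "tau i (Suc n) = None"
  shows "M i (Suc n) = M i n \<union> Jn i n"
proof -
  obtain v' d' ph' where h:
    "(tau i n = None \<and> tau i (Suc n) = None \<and> M i (Suc n) = M i n \<union> Jn i n \<and>
       card (M i n \<union> Jn i n) < 2*f+1) \<or>
    (card (M i (Suc n)) = 2*f+1 \<and> tau i (Suc n) = filt_tau (M i (Suc n)) d' \<and>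
       xh i (Suc n) = filt_x f a n (M i (Suc n)) v' ph')"
    using step_info[OF i Inv_all[OF i]] by blast
  then show ?thesis using s unfolding filt_tau_def by auto
qed

lemma none_mono:
  assumes i: "i \<in> V - A" "c i = 0" and s: "tau i k' = None" and le: "j \<le> k'"
  shows "M i j \<subseteq> M i k'"
  using le
proof (induction k' rule: dec_induct)
  case base then show ?case by simp
next
  case (step n)
  have "tau i (Suc n) = None" using none_before[OF i(1) s] step(2) by simp
  then show ?case using none_step[OF i] step(3) by blast
qed

lemma win1:
  assumes i: "i \<in> V - A" "c i = 0" and cN: "card N \<ge> 2*f+1"
    and N: "\<forall>l\<in>N. \<exists>t. t < K' \<and> l \<in> Jn i t"
  shows "tau i K' \<noteq> None"
proof
  assume s: "tau i K' = None"
  have "N \<subseteq> M i K'"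
  proof
    fix l assume "l \<in> N"
    then obtain t where t: "t < K'" "l \<in> Jn i t" using N by blast
    have "tau i (Suc t) = None" using none_before[OF i(1) s] t(1) by simp
    then have "l \<in> M i (Suc t)" using none_step[OF i] t(2) by blast
    then show "l \<in> M i K'" using none_mono[OF i s, of "Suc t"] t(1) by auto
  qed
  moreover have "finite (M i K')" "card (M i K') < 2*f+1" using Inv_all[OF i, of K'] s unfolding Inv_def by auto
  ultimately have "card N < 2*f+1" using card_mono by (meson le_less_trans)
  then show False using cN by simp
qed

lemma win2:
  assumes i: "i \<in> V - A" "c i = 0" and s0: "tau i w \<noteq> None" and sw: "s \<le> w"
    and cN: "card N \<ge> 2*f+1"
    and N: "\<forall>l\<in>N. w \<le> jt l \<and> jt l < w + T \<and> l \<in> Jn i (jt l) \<and> rt (msg i (jt l) l) \<le> jt l - s"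
  shows "\<exists>t. tau i (w+T) = Some t \<and> t \<le> w + T - s"
proof -
  define Cl where "Cl k \<longleftrightarrow> (\<forall>l'\<in>M i k. d i k l' \<le> k - s) \<or>
     (\<forall>l\<in>N. jt l < k \<longrightarrow> l \<in> M i k \<and> d i k l \<le> k - s)" for k
  have "Cl (w+T)"
  proof (rule dec_induct[of w "w+T" Cl])
    show "w \<le> w + T" by simp
    show "Cl w" unfolding Cl_def using N by auto
  next
    fix n assume n: "w \<le> n" "n < w + T" and IH: "Cl n"
    have sn: "tau i n \<noteq> None" using some_pers_le[OF i(1) s0 n(1)] .
    note TM = tau_Max[OF i sn]
    have X1: "Suc n - s = (n - s) + 1" using sw n(1) by simp
    show "Cl (Suc n)"
    proof (cases "\<forall>l'\<in>M i (Suc n). d i (Suc n) l' \<le> Suc n - s")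
      case True then show ?thesis unfolding Cl_def by blast
    next
      case False
      have left_no: "\<not> (\<forall>l'\<in>M i n. d i n l' \<le> n - s)"
      proof
        assume "\<forall>l'\<in>M i n. d i n l' \<le> n - s"
        then have "Max (d i n ` M i n) \<le> n - s" using TM by (simp add: Max_le_iff)
        then show False using False maxstep[OF i sn] X1 by fastforce
      qed
      then have R: "\<forall>l\<in>N. jt l < n \<longrightarrow> l \<in> M i n \<and> d i n l \<le> n - s" using IH unfolding Cl_def by blast
      have "\<forall>l\<in>N. jt l < Suc n \<longrightarrow> l \<in> M i (Suc n) \<and> d i (Suc n) l \<le> Suc n - s"
      proof (intro ballI impI)
        fix l assume l: "l \<in> N" "jt l < Suc n"
        have hyp: "(l \<in> M i n \<and> d i n l \<le> n - s) \<or> (l \<in> Jn i n \<and> rt (msg i n l) \<le> n - s)"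
        proof (cases "jt l < n")
          case True then show ?thesis using R l(1) by blast
        next
          case False then have "jt l = n" using l(2) by simp
          then show ?thesis using N l(1) by auto
        qed
        show "l \<in> M i (Suc n) \<and> d i (Suc n) l \<le> Suc n - s"
          using core[OF i sn hyp] False X1 by auto
      qed
      then show ?thesis unfolding Cl_def by blast
    qed
  qed
  have sT: "tau i (w+T) \<noteq> None" using some_pers_le[OF i(1) s0] by simp
  note TM = tau_Max[OF i sT]
  have all: "\<forall>l'\<in>M i (w+T). d i (w+T) l' \<le> w + T - s"
  proof (cases "\<forall>l'\<in>M i (w+T). d i (w+T) l' \<le> w + T - s")
    case True then show ?thesis .
  next
    case False
    then have R: "\<forall>l\<in>N. l \<in> M i (w+T) \<and> d i (w+T) l \<le> w + T - s"
      using \<open>Cl (w+T)\<close> N unfolding Cl_def by auto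
    then have sub: "N \<subseteq> M i (w+T)" by blast
    have "N = M i (w+T)" using card_seteq[OF _ sub] TM cN by simp
    then show ?thesis using R by blast
  qed
  then have "Max (d i (w+T) ` M i (w+T)) \<le> w + T - s" using TM by (simp add: Max_le_iff)
  then show ?thesis using TM by blast
qed

end



context ex2
begin

lemma peel:
  fixes P :: "nat \<Rightarrow> nat \<Rightarrow> bool"
  assumes rob: "\<forall>m. strongly_robust V (\<Union>t\<in>{m*T..<(m+1)*T}. E t) (source_set V c) (3*f+1)"
    and Psrc: "\<And>i k. i \<in> V - A \<Longrightarrow> c i \<noteq> 0 \<Longrightarrow> m0*T \<le> k \<Longrightarrow> P i k"
    and Ppers: "\<And>i k. i \<in> V - A \<Longrightarrow> m0*T \<le> k \<Longrightarrow> P i k \<Longrightarrow> P i (Suc k)"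
    and Pwin: "\<And>m i N. m0 \<le> m \<Longrightarrow> i \<in> V - A \<Longrightarrow> c i = 0 \<Longrightarrow> N \<subseteq> V - A \<Longrightarrow> card N \<ge> 2*f+1 \<Longrightarrow>
        (\<forall>l\<in>N. P l (m*T) \<and> (\<exists>t. m*T \<le> t \<and> t < (m+1)*T \<and> l \<in> in_nbrs (E t) i)) \<Longrightarrow> P i ((m+1)*T)"
  shows "\<forall>i\<in>V-A. P i ((m0 + card V)*T)"
proof -
  have pers: "P i k'" if "i \<in> V - A" "m0*T \<le> k" "k \<le> k'" "P i k" for i k k'
    using that(3)
  proof (induction k' rule: dec_induct)
    case base then show ?case using that(4) .
  next
    case (step n) then show ?case using Ppers[OF that(1)] that(2) by simp
  qed
  define Bad where "Bad j = {i\<in>V-A. \<not> P i ((m0+j)*T)}" for j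
  have finB: "finite (Bad j)" for j unfolding Bad_def using finV by auto
  have "card (Bad j) \<le> card V - j" for j
  proof (induction j)
    case 0
    have "Bad 0 \<subseteq> V" unfolding Bad_def by auto
    then show ?case using card_mono[OF finV] by simp
  next
    case (Suc j)
    have sub: "Bad (Suc j) \<subseteq> Bad j"
    proof
      fix i assume "i \<in> Bad (Suc j)"
      then have i: "i \<in> V - A" "\<not> P i ((m0 + Suc j)*T)" unfolding Bad_def by auto
      have "\<not> P i ((m0+j)*T)"
      proof
        assume pj: "P i ((m0+j)*T)"
        have "P i ((m0 + Suc j)*T)"
          using pers[OF i(1) _ _ pj, of "(m0 + Suc j)*T"] by (simp add: add_mult_distrib)
        then show False using i(2) by simp
      qed
      then show "i \<in> Bad j" using i(1) unfolding Bad_def by auto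
    qed
    show ?case
    proof (cases "Bad j = {}")
      case True then show ?thesis using sub by simp
    next
      case False
      have CS: "Bad j \<subseteq> V - source_set V c"
      proof
        fix i assume i: "i \<in> Bad j"
        then have "i \<in> V - A" "\<not> P i ((m0+j)*T)" unfolding Bad_def by auto
        then have "c i = 0" using Psrc[of i "(m0+j)*T"] by (auto simp: add_mult_distrib)
        then show "i \<in> V - source_set V c" using \<open>i \<in> V - A\<close> unfolding source_set_def by auto
      qed
      define U where "U = (\<Union>t\<in>{(m0+j)*T..<(m0+j+1)*T}. E t)"
      have "r_reachable U (Bad j) (3*f+1)"
        using rob CS False unfolding strongly_robust_def U_def by blast
      then obtain i where i: "i \<in> Bad j" and ci: "card (in_nbrs U i - Bad j) \<ge> 3*f+1"
        unfolding r_reachable_def by blast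
      have iV: "i \<in> V - A" "c i = 0" using i CS unfolding Bad_def source_set_def by auto
      define N where "N = in_nbrs U i - Bad j - A"
      have nU: "in_nbrs U i \<subseteq> V" using EV unfolding in_nbrs_def U_def by blast
      have finA: "finite A" using AV finV finite_subset by blast
      have "card (in_nbrs U i - Bad j) - card A \<le> card N"
        unfolding N_def using diff_card_le_card_Diff[OF finA] by blast
      then have cN: "card N \<ge> 2*f+1" using ci cardA by linarith
      have NV: "N \<subseteq> V - A" using nU unfolding N_def by blast
      have Nprop: "\<forall>l\<in>N. P l ((m0+j)*T) \<and> (\<exists>t. (m0+j)*T \<le> t \<and> t < (m0+j+1)*T \<and> l \<in> in_nbrs (E t) i)"
      proof
        fix l assume l: "l \<in> N"
        have "P l ((m0+j)*T)" using l NV unfolding N_def Bad_def by auto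
        moreover have "\<exists>t. (m0+j)*T \<le> t \<and> t < (m0+j+1)*T \<and> l \<in> in_nbrs (E t) i"
          using l unfolding N_def U_def in_nbrs_def by auto
        ultimately show "P l ((m0+j)*T) \<and> (\<exists>t. (m0+j)*T \<le> t \<and> t < (m0+j+1)*T \<and> l \<in> in_nbrs (E t) i)" by blast
      qed
      have "P i ((m0+j+1)*T)" by (rule Pwin[OF _ iV NV cN Nprop]) simp
      then have "i \<notin> Bad (Suc j)" unfolding Bad_def by simp
      then have "Bad (Suc j) \<subseteq> Bad j - {i}" using sub by blast
      then have "card (Bad (Suc j)) \<le> card (Bad j - {i})" using finB card_mono by blast
      also have "\<dots> = card (Bad j) - 1" using i finB by simp
      finally show ?thesis using Suc.IH by linarith
    qed
  qed
  from this[of "card V"] have "Bad (card V) = {}" using finB by simp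
  then show ?thesis unfolding Bad_def by auto
qed

lemma fresh_pers:
  assumes i: "i \<in> V - A" and le: "s \<le> k" "k \<le> k'" and t: "tau i k = Some t" "t \<le> k - s"
  shows "\<exists>t'. tau i k' = Some t' \<and> t' \<le> k' - s"
  using le(2)
proof (induction k' rule: dec_induct)
  case base then show ?case using t by blast
next
  case (step n)
  then obtain t1 where t1: "tau i n = Some t1" "t1 \<le> n - s" by blast
  obtain t2 where "tau i (Suc n) = Some t2" "t2 \<le> t1 + 1" using tau_step_le[OF i t1(1)] by blast
  then show ?case using t1 le step(1) by auto
qed

lemma final:
  assumes T0: "0 < T"
    and rob: "\<forall>m. strongly_robust V (\<Union>t\<in>{m*T..<(m+1)*T}. E t) (source_set V c) (3*f+1)"
    and r: "0 < \<rho>" "\<rho> < 1" and Lr: "\<And>i. c i \<noteq> 0 \<Longrightarrow> a - L i * c i = \<rho>"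
  shows "\<exists>C::real. C \<ge> 0 \<and> (\<exists>K::nat. \<forall>k\<ge>K. \<forall>i\<in>V - A. \<bar>xh i k - x k\<bar> \<le> C * \<rho> ^ k)"
proof -
  define n where "n = card V"
  have ph1: "\<forall>i\<in>V-A. tau i ((0 + n)*T) \<noteq> None"
    unfolding n_def
  proof (rule peel[OF rob])
    show "tau i k \<noteq> None" if "i \<in> V - A" "c i \<noteq> 0" for i k using src[OF that] by simp
    show "tau i (Suc k) \<noteq> None" if "i \<in> V - A" "tau i k \<noteq> None" for i k using some_pers that by blast
    fix m i N
    assume i: "i \<in> V - A" "c i = 0" and NV: "N \<subseteq> V - A" and cN: "2*f+1 \<le> card N"
      and Np: "\<forall>l\<in>N. tau l (m*T) \<noteq> None \<and> (\<exists>t. m*T \<le> t \<and> t < (m+1)*T \<and> l \<in> in_nbrs (E t) i)"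
    have "\<forall>l\<in>N. \<exists>t. t < (m+1)*T \<and> l \<in> Jn i t"
    proof
      fix l assume l: "l \<in> N"
      then obtain t where t: "m*T \<le> t" "t < (m+1)*T" "l \<in> in_nbrs (E t) i" using Np by blast
      have lV: "l \<in> V - A" using l NV by blast
      have "tau l t \<noteq> None" using some_pers_le[OF lV _ t(1)] Np l by blast
      then obtain \<tau> where \<tau>: "tau l t = Some \<tau>" by auto
      have "l \<in> Jn i t" using Jn_intro[OF t(3) _ \<tau> tau_le[OF lV \<tau>]] lV by blast
      then show "\<exists>t. t < (m+1)*T \<and> l \<in> Jn i t" using t(2) by blast
    qed
    then show "tau i ((m+1)*T) \<noteq> None" by (rule win1[OF i cN])
  qed
  have ph1': "tau i k \<noteq> None" if "i \<in> V - A" "n*T \<le> k" for i k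
    using some_pers_le[OF that(1) _ that(2)] ph1 that(1) by simp
  have ph2: "\<forall>i\<in>V-A. \<exists>t. tau i ((m0 + n)*T) = Some t \<and> t \<le> (m0+n)*T - m0*T" if m0: "n \<le> m0" for m0
    unfolding n_def
  proof (rule peel[OF rob])
    show "\<exists>t. tau i k = Some t \<and> t \<le> k - m0*T" if "i \<in> V - A" "c i \<noteq> 0" for i k
      using src[OF that] by simp
    show "\<exists>t. tau i (Suc k) = Some t \<and> t \<le> Suc k - m0*T"
      if "i \<in> V - A" "m0*T \<le> k" "\<exists>t. tau i k = Some t \<and> t \<le> k - m0*T" for i k
      using that fresh_pers[OF that(1) that(2), of "Suc k"] by auto
    fix m i N
    assume mm: "m0 \<le> m" and i: "i \<in> V - A" "c i = 0" and NV: "N \<subseteq> V - A" and cN: "2*f+1 \<le> card N"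
      and Np: "\<forall>l\<in>N. (\<exists>t. tau l (m*T) = Some t \<and> t \<le> m*T - m0*T) \<and>
                 (\<exists>t. m*T \<le> t \<and> t < (m+1)*T \<and> l \<in> in_nbrs (E t) i)"
    have sw: "m0*T \<le> m*T" using mm by simp
    have "\<forall>l\<in>N. \<exists>t. m*T \<le> t \<and> t < m*T + T \<and> l \<in> Jn i t \<and> rt (msg i t l) \<le> t - m0*T"
    proof
      fix l assume l: "l \<in> N"
      then obtain t where t: "m*T \<le> t" "t < (m+1)*T" "l \<in> in_nbrs (E t) i" using Np by blast
      have lV: "l \<in> V - A" using l NV by blast
      obtain t0 where t0: "tau l (m*T) = Some t0" "t0 \<le> m*T - m0*T" using Np l by blast
      obtain \<tau> where \<tau>: "tau l t = Some \<tau>" "\<tau> \<le> t - m0*T"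
        using fresh_pers[OF lV sw t(1) t0] by blast
      have "\<tau> \<le> t" using \<tau>(2) by simp
      then have "l \<in> Jn i t \<and> rt (msg i t l) = \<tau>" using Jn_intro[OF t(3) _ \<tau>(1)] lV by blast
      then show "\<exists>t. m*T \<le> t \<and> t < m*T + T \<and> l \<in> Jn i t \<and> rt (msg i t l) \<le> t - m0*T"
        using t \<tau>(2) by auto
    qed
    then obtain jt where jt: "\<forall>l\<in>N. m*T \<le> jt l \<and> jt l < m*T + T \<and> l \<in> Jn i (jt l) \<and> rt (msg i (jt l) l) \<le> jt l - m0*T"
      by metis
    have s0: "tau i (m*T) \<noteq> None" using ph1'[OF i(1)] m0 mm
      by (meson le_trans mult_le_mono1)
    obtain t where "tau i (m*T + T) = Some t" "t \<le> m*T + T - m0*T"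
      using win2[OF i s0 sw cN jt] by blast
    then show "\<exists>t. tau i ((m+1)*T) = Some t \<and> t \<le> (m+1)*T - m0*T" by (simp add: add.commute)
  qed
  define Aa where "Aa = max 1 \<bar>a\<bar>"
  define G0 where "G0 = (\<Sum>i\<in>V. \<bar>xh i 0 - x 0\<bar>)"
  define Q where "Q = Aa/\<rho>"
  define D where "D = (n+2)*T"
  have Q1: "1 \<le> Q" unfolding Q_def Aa_def using r by (simp add: le_divide_eq)
  have G0: "0 \<le> G0" unfolding G0_def by (simp add: sum_nonneg)
  have tb: "\<exists>t. tau i k = Some t \<and> t \<le> D" if i: "i \<in> V - A" and k: "(2*n+2)*T \<le> k" for i k
  proof -
    define q where "q = k div T"
    have "(2*n+2)*T div T \<le> q" unfolding q_def using k div_le_mono by blast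
    then have q: "2*n+2 \<le> q" using T0 by simp
    define m0 where "m0 = q - n - 1"
    have mq: "m0 + n + 1 = q" using q unfolding m0_def by simp
    have kq: "k = q*T + k mod T" unfolding q_def by simp
    have kmod: "k mod T < T" using T0 by simp
    have e1: "m0*T + n*T + T = q*T" using mq by (metis add_mult_distrib mult_1)
    have nm: "n \<le> m0" unfolding m0_def using q by simp
    obtain t where t: "tau i ((m0 + n)*T) = Some t" "t \<le> (m0+n)*T - m0*T"
      using ph2[OF nm] i by blast
    have le1: "m0*T \<le> (m0+n)*T" by simp
    have le2: "(m0+n)*T \<le> k" using e1 kq by (simp add: add_mult_distrib)
    obtain t' where t': "tau i k = Some t'" "t' \<le> k - m0*T"
      using fresh_pers[OF i le1 le2 t] by blast
    have "k - m0*T \<le> D" unfolding D_def using e1 kq kmod by (simp add: add_mult_distrib)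
    then show ?thesis using t' by auto
  qed
  show ?thesis
  proof (intro exI conjI)
    show "0 \<le> Gf Q G0 D" using Gf_nonneg[OF Q1 G0] .
    show "\<forall>k\<ge>(2*n+2)*T. \<forall>i\<in>V - A. \<bar>xh i k - x k\<bar> \<le> Gf Q G0 D * \<rho> ^ k"
    proof (intro allI impI ballI)
      fix k i assume k: "(2*n+2)*T \<le> k" and i: "i \<in> V - A"
      obtain t where t: "tau i k = Some t" "t \<le> D" using tb[OF i k] by blast
      have "\<bar>xh i k - x k\<bar> \<le> Gf Q G0 t * \<rho> ^ k"
        using err[OF r Lr i t(1)] unfolding Q_def Aa_def G0_def by blast
      also have "\<dots> \<le> Gf Q G0 D * \<rho> ^ k"
        using Gf_mono[OF Q1 G0 t(2)] r by (intro mult_right_mono) auto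
      finally show "\<bar>xh i k - x k\<bar> \<le> Gf Q G0 D * \<rho> ^ k" .
    qed
  qed
qed

end


theorem theorem2:
  fixes V :: "nat set" and E :: "nat \<Rightarrow> (nat \<times> nat) set"
    and a :: real and c :: "nat \<Rightarrow> real" and f :: nat
  assumes "finite V"
    and "\<forall>k. E k \<subseteq> V \<times> V"
    and "jointly_strongly_robust V E (source_set V c) (3*f+1)"
  shows "\<forall>\<rho>::real. 0 < \<rho> \<and> \<rho> < 1 \<longrightarrow>
    (\<exists>L :: nat \<Rightarrow> real.
      \<forall>A adv x xh tau M v d ph.
        A \<subseteq> V \<and> card A \<le> f \<and> alg2_exec V E f a c L A adv x xh tau M v d ph \<longrightarrow>
        (\<exists>C::real. C \<ge> 0 \<and> (\<exists>K::nat. \<forall>k\<ge>K. \<forall>i\<in>V - A. \<bar>xh i k - x k\<bar> \<le> C * \<rho> ^ k)))"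
proof (intro allI impI)
  fix \<rho> :: real assume r: "0 < \<rho> \<and> \<rho> < 1"
  obtain T where T: "T > 0" "\<forall>k. strongly_robust V (\<Union>t\<in>{k*T..<(k+1)*T}. E t) (source_set V c) (3*f+1)"
    using assms(3) unfolding jointly_strongly_robust_def by blast
  define L where "L i = (if c i = 0 then 0 else (a - \<rho>) / c i)" for i
  have Lr: "a - L i * c i = \<rho>" if "c i \<noteq> 0" for i using that unfolding L_def by simp
  show "\<exists>L :: nat \<Rightarrow> real.
      \<forall>A adv x xh tau M v d ph.
        A \<subseteq> V \<and> card A \<le> f \<and> alg2_exec V E f a c L A adv x xh tau M v d ph \<longrightarrow>
        (\<exists>C::real. C \<ge> 0 \<and> (\<exists>K::nat. \<forall>k\<ge>K. \<forall>i\<in>V - A. \<bar>xh i k - x k\<bar> \<le> C * \<rho> ^ k))"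
  proof (rule exI[of _ L], intro allI impI)
    fix A adv x xh tau M v d ph
    assume h: "A \<subseteq> V \<and> card A \<le> f \<and> alg2_exec V E f a c L A adv x xh tau M v d ph"
    interpret ex2 V E f a c L A adv x xh tau M v d ph
      using assms(1,2) h by unfold_locales auto
    show "\<exists>C::real. C \<ge> 0 \<and> (\<exists>K::nat. \<forall>k\<ge>K. \<forall>i\<in>V - A. \<bar>xh i k - x k\<bar> \<le> C * \<rho> ^ k)"
      using final[OF T(1) T(2)] r Lr by blast
  qed
qed

end
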